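(* Let $M$ be a compact complex manifold of complex dimension $n$. For all $p,q$ with $0\le p,q\le n$: (1) $b^{p,q}=\tilde b^{p,q}+a^{p,q}$, $d^{p,q}=\tilde d^{p,q}+a^{p,q}$, $c^{p,q}=\tilde c^{p,q}+f^{p,q}$, $e^{p,q}=\tilde e^{p,q}+f^{p,q}$; (2) $b^{p,q}\le h^{p,q}_{\partial\bar\partial}$, $d^{p,q}\le h^{p,q}_{\partial\bar\partial}$, $c^{p,q}\le h^{p,q}_{\partial+\bar\partial}$, $e^{p,q}\le h^{p,q}_{\partial+\bar\partial}$; (3) $h^{p,q}_{\partial+\bar\partial}+\tilde b^{p,q}=h^{p,q}_{\bar\partial}+c^{p,q}$, $h^{p,q}_{\partial+\bar\partial}+\tilde d^{p,q}=h^{p,q}_{\partial}+e^{p,q}$, $h^{p,q}_{\partial\bar\partial}+\tilde e^{p,q}=h^{p,q}_{\bar\partial}+d^{p,q}$, $h^{p,q}_{\partial\bar\partial}+\tilde c^{p,q}=h^{p,q}_{\partial}+b^{p,q}$; (4) $h^{p,q}_{\partial+\bar\partial}+h^{p,q}_{\partial\bar\partial}=h^{p,q}_{\partial}+h^{p,q}_{\bar\partial}+a^{p,q}+f^{p,q}$; (5) $h^{0,q}_{\bar\partial}\le h^{0,q}_{\partial+\bar\partial}$, $h^{0,q}_{\partial\bar\partial}\le h^{0,q}_{\partial}$, $h^{p,0}_{\partial\bar\partial}\le h^{p,0}_{\bar\partial}$, $h^{p,0}_{\partial}\le h^{p,0}_{\partial+\bar\partial}$; (6) $h^{p,n}_{\partial}\le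 h^{p,n}_{\partial\bar\partial}$, $h^{p,n}_{\partial+\bar\partial}\le h^{p,n}_{\bar\partial}$, $h^{n,q}_{\bar\partial}\le h^{n,q}_{\partial\bar\partial}$, $h^{n,q}_{\partial+\bar\partial}\le h^{n,q}_{\partial}$.
   Context: Let $M$ be a compact complex manifold of complex dimension $n$ and $\mathcal{E}^{p,q}(M)$ the space of smooth complex $(p,q)$-forms. In bidegree $(p,q)$, $\ker\partial,\ker\bar\partial,\ker\partial\bar\partial$ denote the kernels of $\partial,\bar\partial,\partial\bar\partial$ on $\mathcal{E}^{p,q}(M)$, and $\mathrm{Im}\,\partial=\partial\mathcal{E}^{p-1,q}(M)$, $\mathrm{Im}\,\bar\partial=\bar\partial\mathcal{E}^{p,q-1}(M)$, $\mathrm{Im}\,\partial\bar\partial=\partial\bar\partial\mathcal{E}^{p-1,q-1}(M)$ (zero if an index is negative). Define, all in bidegree $(p,q)$: $H^{p,q}_{\bar\partial}=\ker\bar\partial/\mathrm{Im}\,\bar\partial$, $H^{p,q}_{\partial}=\ker\partial/\mathrm{Im}\,\partial$, $H^{p,q}_{\partial\bar\partial}=(\ker\partial\cap\ker\bar\partial)/\mathrm{Im}\,\partial\bar\partial$ (Bott–Chern), $H^{p,q}_{\partial+\bar\partial}=\ker\partial\bar\partial/(\mathrm{Im}\,\partial+\mathrm{Im}\,\bar\partial)$ (Aeppli), and $A^{p,q}=(\mathrm{Im}\,\partial\cap\mathrm{Im}\,\bar\partial)/\mathrm{Im}\,\partial\bar\partial$, $B^{p,q}=(\mathrm{Im}\,\partial\cap\ker\bar\partial)/\mathrm{Im}\,\partial\bar\partial$,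 $C^{p,q}=\ker\partial\bar\partial/(\mathrm{Im}\,\partial+\ker\bar\partial)$, $D^{p,q}=(\ker\partial\cap\mathrm{Im}\,\bar\partial)/\mathrm{Im}\,\partial\bar\partial$, $E^{p,q}=\ker\partial\bar\partial/(\ker\partial+\mathrm{Im}\,\bar\partial)$, $F^{p,q}=\ker\partial\bar\partial/(\ker\partial+\ker\bar\partial)$, $\tilde B^{p,q}=(\mathrm{Im}\,\partial\cap\ker\bar\partial)/(\mathrm{Im}\,\partial\cap\mathrm{Im}\,\bar\partial)$, $\tilde D^{p,q}=(\ker\partial\cap\mathrm{Im}\,\bar\partial)/(\mathrm{Im}\,\partial\cap\mathrm{Im}\,\bar\partial)$, $\tilde C^{p,q}=(\ker\partial+\ker\bar\partial)/(\mathrm{Im}\,\partial+\ker\bar\partial)$, $\tilde E^{p,q}=(\ker\partial+\ker\bar\partial)/(\ker\partial+\mathrm{Im}\,\bar\partial)$. All are finite-dimensional; lowercase letters denote complex dimensions, e.g. $a^{p,q}=\dim A^{p,q}$, $\tilde b^{p,q}=\dim\tilde B^{p,q}$, $h^{p,q}_{\partial+\bar\partial}=\dim H^{p,q}_{\partial+\bar\partial}$. *)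

theory Defs
  imports Complex_Main
begin

text \<open>The smooth forms of a compact complex manifold of dimension n form a
bounded double complex of complex vector spaces E p q (0 \<le> p,q \<le> n) with differentials
d (= partial, bidegree (1,0)) and db (= dbar, bidegree (0,1)) satisfying d d = 0, db db = 0,
d db + db d = 0. All E p q live inside one ambient complex vector space of type 'v.\<close>

definition ssum :: "'v::ab_group_add set \<Rightarrow> 'v set \<Rightarrow> 'v set" where
  "ssum A B = {a + b | a b. a \<in> A \<and> b \<in> B}"

text \<open>A complement of B inside A (a subspace C with C + B = A and C \<inter> B = 0); it is
isomorphic to the quotient space A/B.\<close>
definition is_compl :: "(complex \<Rightarrow> 'v::ab_group_add \<Rightarrow> 'v) \<Rightarrow> 'v set \<Rightarrow> 'v set \<Rightarrow> 'v set \<Rightarrow> bool" where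
  "is_compl scale A B C \<longleftrightarrow> module.subspace scale C \<and> C \<subseteq> A \<and> C \<inter> B = {0} \<and> ssum C B = A"

definition qdim :: "(complex \<Rightarrow> 'v::ab_group_add \<Rightarrow> 'v) \<Rightarrow> 'v set \<Rightarrow> 'v set \<Rightarrow> nat" where
  "qdim scale A B = vector_space.dim scale (SOME C. is_compl scale A B C)"

definition qfin :: "(complex \<Rightarrow> 'v::ab_group_add \<Rightarrow> 'v) \<Rightarrow> 'v set \<Rightarrow> 'v set \<Rightarrow> bool" where
  "qfin scale A B \<longleftrightarrow> (\<exists>C S. is_compl scale A B C \<and> finite S \<and> module.span scale S = C)"

definition bdcx :: "(complex \<Rightarrow> 'v::ab_group_add \<Rightarrow> 'v) \<Rightarrow> (nat \<Rightarrow> nat \<Rightarrow> 'v set)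
    \<Rightarrow> ('v \<Rightarrow> 'v) \<Rightarrow> ('v \<Rightarrow> 'v) \<Rightarrow> nat \<Rightarrow> bool" where
  "bdcx scale E d db n \<longleftrightarrow>
     vector_space scale \<and> Vector_Spaces.linear scale scale d \<and> Vector_Spaces.linear scale scale db \<and>
     (\<forall>p q. module.subspace scale (E p q)) \<and>
     (\<forall>p q. n < p \<or> n < q \<longrightarrow> E p q = {0}) \<and>
     (\<forall>p q x. x \<in> E p q \<longrightarrow> d x \<in> E (Suc p) q \<and> db x \<in> E p (Suc q) \<and>
        d (d x) = 0 \<and> db (db x) = 0 \<and> d (db x) + db (d x) = 0)"

text \<open>Kernels and images in bidegree (p,q); images are 0 when an index would be negative.\<close>
definition kerD where "kerD E d p q = {x \<in> E p q. d x = 0}"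
definition kerDb where "kerDb E db p q = {x \<in> E p q. db x = 0}"
definition kerDDb where "kerDDb E d db p q = {x \<in> E p q. d (db x) = 0}"
definition imD where "imD E d p q = (if p = 0 then {0} else d ` E (p - 1) q)"
definition imDb where "imDb E db p q = (if q = 0 then {0} else db ` E p (q - 1))"
definition imDDb where
  "imDDb E d db p q = (if p = 0 \<or> q = 0 then {0} else (\<lambda>x. d (db x)) ` E (p - 1) (q - 1))"

text \<open>The fourteen quotients, as pairs (numerator, denominator), in bidegree (p,q).\<close>
definition H_db where "H_db E d db p q = (kerDb E db p q, imDb E db p q)"
definition H_d where "H_d E d db p q = (kerD E d p q, imD E d p q)"
definition H_BC where "H_BC E d db p q = (kerD E d p q \<inter> kerDb E db p q, imDDb E d db p q)"
definition H_A where "H_A E d db p q = (kerDDb E d db p q, ssum (imD E d p q) (imDb E db p q))"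
definition Aq where "Aq E d db p q = (imD E d p q \<inter> imDb E db p q, imDDb E d db p q)"
definition Bq where "Bq E d db p q = (imD E d p q \<inter> kerDb E db p q, imDDb E d db p q)"
definition Cq where "Cq E d db p q = (kerDDb E d db p q, ssum (imD E d p q) (kerDb E db p q))"
definition Dq where "Dq E d db p q = (kerD E d p q \<inter> imDb E db p q, imDDb E d db p q)"
definition Eq where "Eq E d db p q = (kerDDb E d db p q, ssum (kerD E d p q) (imDb E db p q))"
definition Fq where "Fq E d db p q = (kerDDb E d db p q, ssum (kerD E d p q) (kerDb E db p q))"
definition Bt where "Bt E d db p q = (imD E d p q \<inter> kerDb E db p q, imD E d p q \<inter> imDb E db p q)"
definition Dt where "Dt E d db p q = (kerD E d p q \<inter> imDb E db p q, imD E d p q \<inter> imDb E db p q)"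
definition Ct where "Ct E d db p q = (ssum (kerD E d p q) (kerDb E db p q), ssum (imD E d p q) (kerDb E db p q))"
definition Et where "Et E d db p q = (ssum (kerD E d p q) (kerDb E db p q), ssum (kerD E d p q) (imDb E db p q))"

definition qd :: "(complex \<Rightarrow> 'v::ab_group_add \<Rightarrow> 'v) \<Rightarrow> 'v set \<times> 'v set \<Rightarrow> nat" where
  "qd scale X = qdim scale (fst X) (snd X)"

definition qf :: "(complex \<Rightarrow> 'v::ab_group_add \<Rightarrow> 'v) \<Rightarrow> 'v set \<times> 'v set \<Rightarrow> bool" where
  "qf scale X = qfin scale (fst X) (snd X)"

text \<open>Standing assumption of the paper: all fourteen quotients are finite-dimensional.\<close>
definition all_fin where
  "all_fin scale E d db \<longleftrightarrow> (\<forall>p q. \<forall>Q \<in> {H_db, H_d, H_BC, H_A, Aq, Bq, Cq, Dq, Eq, Fq, Bt, Dt, Ct, Et}.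
      qf scale (Q E d db p q))"

end

theory Submission
  imports Defs
begin

definition qgd :: "(complex \<Rightarrow> 'v::ab_group_add \<Rightarrow> 'v) \<Rightarrow> 'v set \<Rightarrow> 'v set \<Rightarrow> 'v set \<Rightarrow> bool" where
  "qgd scale S A B \<longleftrightarrow> S \<subseteq> A \<and> \<not> module.dependent scale S \<and> module.span scale S \<inter> B = {0} \<and> ssum (module.span scale S) B = A"

definition qfdd :: "(complex \<Rightarrow> 'v::ab_group_add \<Rightarrow> 'v) \<Rightarrow> 'v set \<Rightarrow> 'v set \<Rightarrow> nat \<Rightarrow> bool" where
  "qfdd scale A B k \<longleftrightarrow> (\<exists>S. qgd scale S A B \<and> finite S \<and> card S = k)"

lemma ssum_I: "a \<in> A \<Longrightarrow> b \<in> B \<Longrightarrow> a + b \<in> ssum A B"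
  unfolding ssum_def by blast

lemma ssum_E: "x \<in> ssum A B \<Longrightarrow> (\<And>a b. a \<in> A \<Longrightarrow> b \<in> B \<Longrightarrow> x = a + b \<Longrightarrow> P) \<Longrightarrow> P"
  unfolding ssum_def by blast

locale cvs = vector_space "scale :: complex \<Rightarrow> 'v::ab_group_add \<Rightarrow> 'v" for scale (infixr \<open>*s\<close> 75)
begin

lemma gd_span_sub: assumes "qgd scale S A B" shows "span S \<subseteq> A"
proof
  fix x :: 'v assume x: "x \<in> span S"
  have "span S \<inter> B = {0}" "ssum (span S) B = A" using assms by (auto simp: qgd_def)
  moreover then have "x + 0 \<in> ssum (span S) B" using x by (intro ssum_I) auto
  ultimately show "x \<in> A" by simp
qed

lemma gd_compl: "qgd scale S A B \<Longrightarrow> is_compl scale A B (span S)"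
  unfolding is_compl_def using gd_span_sub[of S A B] by (auto simp: qgd_def)

lemma compl_gd:
  assumes "is_compl scale A B C"
  obtains S where "qgd scale S A B" "span S = C"
proof -
  from assms have C: "subspace C" "C \<subseteq> A" "C \<inter> B = {0}" "ssum C B = A"
    by (auto simp: is_compl_def)
  obtain S where S: "S \<subseteq> C" "independent S" "C \<subseteq> span S"
    using maximal_independent_subset[of C] by blast
  have "span S = C" using span_subspace[OF S(1) S(3) C(1)] .
  then show ?thesis using that[of S] S C unfolding qgd_def by auto
qed

lemma gd_bound:
  assumes S: "qgd scale S A B" "finite S" and T: "qgd scale T A B" and B: "subspace B"
  shows "finite T \<and> card T \<le> card S"
proof -
  have TA: "T \<subseteq> A" and iT: "independent T" and TB: "span T \<inter> B = {0}"
    using T by (auto simp: qgd_def)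
  have SB: "span S \<inter> B = {0}" and SA: "ssum (span S) B = A" using S by (auto simp: qgd_def)
  have ex: "\<exists>c. c \<in> span S \<and> t - c \<in> B" if "t \<in> T" for t
  proof -
    have "t \<in> ssum (span S) B" using that TA SA by auto
    then obtain c b where "c \<in> span S" "b \<in> B" "t = c + b" by (auto elim: ssum_E)
    then show ?thesis by (intro exI[of _ c]) simp
  qed
  define g where "g t = (SOME c. c \<in> span S \<and> t - c \<in> B)" for t
  have g: "g t \<in> span S" "t - g t \<in> B" if "t \<in> T" for t
    using someI_ex[OF ex[OF that]] unfolding g_def by auto
  have inj: "inj_on g T"
  proof (rule inj_onI)
    fix t1 t2 assume t: "t1 \<in> T" "t2 \<in> T" "g t1 = g t2"
    have "t1 - t2 = (t1 - g t1) - (t2 - g t2)" using t(3) by simp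
    then have "t1 - t2 \<in> B" using g[OF t(1)] g[OF t(2)] B by (metis subspace_diff)
    moreover have "t1 - t2 \<in> span T" using t by (simp add: span_base span_diff)
    ultimately have "t1 - t2 = 0" using TB by blast
    then show "t1 = t2" by simp
  qed
  have ind: "independent (g ` T)"
    unfolding independent_explicit_module
  proof (intro allI impI)
    fix F u v assume F: "finite F" "F \<subseteq> g ` T" "(\<Sum>v\<in>F. u v *s v) = 0" "v \<in> F"
    define F' where "F' = T \<inter> g -` F"
    have F'T: "F' \<subseteq> T" by (auto simp: F'_def)
    have gF: "g ` F' = F" using F(2) by (auto simp: F'_def)
    have injF: "inj_on g F'" using inj F'T inj_on_subset by blast
    have fF': "finite F'" using finite_imageD[of g F'] gF F(1) injF by simp
    have s0: "(\<Sum>t\<in>F'. u (g t) *s g t) = 0"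
      using F(3) sum.reindex[OF injF, of "\<lambda>v. u v *s v"] gF by simp
    have "(\<Sum>t\<in>F'. u (g t) *s t) = (\<Sum>t\<in>F'. u (g t) *s g t) + (\<Sum>t\<in>F'. u (g t) *s (t - g t))"
      by (simp add: sum.distrib[symmetric] scale_right_diff_distrib)
    also have "\<dots> = (\<Sum>t\<in>F'. u (g t) *s (t - g t))" using s0 by simp
    finally have eq: "(\<Sum>t\<in>F'. u (g t) *s t) = (\<Sum>t\<in>F'. u (g t) *s (t - g t))" .
    have "(\<Sum>t\<in>F'. u (g t) *s (t - g t)) \<in> B"
      using F'T g B by (intro subspace_sum) (auto intro: subspace_scale)
    moreover have "(\<Sum>t\<in>F'. u (g t) *s t) \<in> span T"
      using F'T by (intro span_sum span_scale) (auto intro: span_base)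
    ultimately have z: "(\<Sum>t\<in>F'. u (g t) *s t) = 0" using TB eq by auto
    obtain t where t: "t \<in> F'" "v = g t" using F(4) gF by auto
    have "(\<lambda>t. u (g t)) t = 0"
      by (rule independentD[OF iT fF' F'T z t(1)])
    then show "u v = 0" using t by simp
  qed
  have "g ` T \<subseteq> span S" using g by auto
  from independent_span_bound[OF S(2) ind this]
  have "finite (g ` T) \<and> card (g ` T) \<le> card S" .
  then show ?thesis using inj finite_imageD card_image by metis
qed


lemma fd_qd:
  assumes "qfdd scale A B k" "subspace B"
  shows "qd scale (A, B) = k \<and> qf scale (A, B)"
proof -
  obtain S where S: "qgd scale S A B" "finite S" "card S = k" using assms by (auto simp: qfdd_def)
  have ex: "\<exists>C. is_compl scale A B C" using gd_compl[OF S(1)] by blast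
  define C where "C = (SOME C. is_compl scale A B C)"
  have C: "is_compl scale A B C" using someI_ex[OF ex] unfolding C_def .
  obtain T where T: "qgd scale T A B" "span T = C" using compl_gd[OF C] by blast
  have "finite T \<and> card T \<le> card S" using gd_bound[OF S(1,2) T(1) assms(2)] .
  moreover then have "card S \<le> card T" using gd_bound[OF T(1) _ S(1) assms(2)] by simp
  moreover have "dim C = card T" using T(2) T(1)[unfolded qgd_def] dim_span_eq_card_independent by metis
  ultimately have "dim C = k" using S by simp
  then have "qd scale (A, B) = k" by (simp add: qd_def qdim_def C_def)
  moreover have "qf scale (A, B)" unfolding qf_def qfin_def using gd_compl[OF S(1)] S(2) by auto
  ultimately show ?thesis ..
qed

lemma qf_fd:
  assumes "qf scale (A, B)" "subspace B"
  shows "qfdd scale A B (qd scale (A, B))"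
proof -
  obtain C S0 where C: "is_compl scale A B C" "finite S0" "span S0 = C"
    using assms(1) by (auto simp: qf_def qfin_def)
  obtain T where T: "qgd scale T A B" "span T = C" using compl_gd[OF C(1)] by blast
  have "T \<subseteq> span S0" using T C span_superset by blast
  then have "finite T" using independent_span_bound[OF C(2)] T(1) by (auto simp: qgd_def)
  then have "qfdd scale A B (card T)" using T by (auto simp: qfdd_def)
  then show ?thesis using fd_qd[OF _ assms(2)] by metis
qed

lemma indep_Un:
  assumes "independent S1" "independent S2" "span S1 \<inter> span S2 = {0}"
  shows "independent (S1 \<union> S2)"
  unfolding independent_explicit_module
proof (intro allI impI)
  fix t u v assume t: "finite t" "t \<subseteq> S1 \<union> S2" "(\<Sum>v\<in>t. u v *s v) = 0" "v \<in> t"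
  define t1 where "t1 = t \<inter> S1"
  define t2 where "t2 = t - S1"
  have ft: "finite t1" "finite t2" using t(1) by (auto simp: t1_def t2_def)
  have tt: "t = t1 \<union> t2" "t1 \<inter> t2 = {}" by (auto simp: t1_def t2_def)
  have t12: "t1 \<subseteq> S1" "t2 \<subseteq> S2" using t(2) by (auto simp: t1_def t2_def)
  have "(\<Sum>v\<in>t1. u v *s v) + (\<Sum>v\<in>t2. u v *s v) = 0"
    using t(3) sum.union_disjoint[OF ft tt(2), of "\<lambda>v. u v *s v"] tt(1) by simp
  then have e: "(\<Sum>v\<in>t1. u v *s v) = - (\<Sum>v\<in>t2. u v *s v)" by (rule eq_neg_iff_add_eq_0[THEN iffD2])
  have "(\<Sum>v\<in>t1. u v *s v) \<in> span S1" using t12 by (intro span_sum span_scale) (auto intro: span_base)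
  moreover have "- (\<Sum>v\<in>t2. u v *s v) \<in> span S2" using t12 by (intro span_neg span_sum span_scale) (auto intro: span_base)
  ultimately have z1: "(\<Sum>v\<in>t1. u v *s v) = 0" using assms(3) e by (metis IntI singletonD)
  then have z2: "(\<Sum>v\<in>t2. u v *s v) = 0" using e by (metis neg_equal_iff_equal neg_0_equal_iff_equal minus_zero)
  show "u v = 0"
  proof (cases "v \<in> t1")
    case True then show ?thesis using independentD[OF assms(1) ft(1) t12(1) z1] by blast
  next
    case False then have "v \<in> t2" using t(4) tt by auto
    then show ?thesis using independentD[OF assms(2) ft(2) t12(2) z2] by blast
  qed
qed

lemma span_disj:
  assumes "independent Sa" "S \<subseteq> Sa" "T \<subseteq> Sa" "S \<inter> T = {}"
  shows "span S \<inter> span T = {0}"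
proof -
  have "x = 0" if x: "x \<in> span S" "x \<in> span T" for x
  proof -
    obtain t1 r1 where 1: "x = (\<Sum>a\<in>t1. r1 a *s a)" "finite t1" "t1 \<subseteq> S"
      using x(1) unfolding span_explicit by blast
    obtain t2 r2 where 2: "x = (\<Sum>a\<in>t2. r2 a *s a)" "finite t2" "t2 \<subseteq> T"
      using x(2) unfolding span_explicit by blast
    have dj: "t1 \<inter> t2 = {}" using 1(3) 2(3) assms(4) by auto
    define u where "u a = (if a \<in> t1 then r1 a else - r2 a)" for a
    have "(\<Sum>a\<in>t1 \<union> t2. u a *s a) = (\<Sum>a\<in>t1. u a *s a) + (\<Sum>a\<in>t2. u a *s a)"
      by (rule sum.union_disjoint[OF 1(2) 2(2) dj])
    also have "(\<Sum>a\<in>t1. u a *s a) = x" using 1(1) by (auto simp: u_def intro!: sum.cong)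
    also have "(\<Sum>a\<in>t2. u a *s a) = - x" using 2(1) dj
      by (auto simp: u_def sum_negf[symmetric] intro!: sum.cong)
    finally have z: "(\<Sum>a\<in>t1 \<union> t2. u a *s a) = 0" by simp
    have "u a = 0" if "a \<in> t1" for a
      using independentD[OF assms(1) _ _ z, of a] 1(2,3) 2(2,3) assms(2,3) that by auto
    then have "\<And>a. a \<in> t1 \<Longrightarrow> r1 a = 0" by (auto simp: u_def)
    then show "x = 0" using 1(1) by simp
  qed
  then show ?thesis using span_zero by auto
qed

lemma gd_exists:
  assumes "subspace A" "subspace B" "B \<subseteq> A"
  obtains S where "qgd scale S A B"
proof -
  obtain Sb where Sb: "Sb \<subseteq> B" "independent Sb" "B \<subseteq> span Sb"
    using maximal_independent_subset[of B] by blast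
  obtain Sa where Sa: "Sb \<subseteq> Sa" "Sa \<subseteq> A" "independent Sa" "A \<subseteq> span Sa"
    using maximal_independent_subset_extend[of Sb A] Sb assms(3) by blast
  define S where "S = Sa - Sb"
  have spB: "span Sb = B" using span_subspace[OF Sb(1) Sb(3) assms(2)] .
  have spA: "span Sa = A" using span_subspace[OF Sa(2) Sa(4) assms(1)] .
  have 1: "S \<subseteq> A" using Sa by (auto simp: S_def)
  have 2: "independent S" using independent_mono[OF Sa(3)] by (auto simp: S_def)
  have 3: "span S \<inter> B = {0}" using span_disj[OF Sa(3), of S Sb] Sa(1) spB by (auto simp: S_def)
  have "S \<union> Sb = Sa" using Sa(1) by (auto simp: S_def)
  then have "span Sa = ssum (span S) B" using span_Un[of S Sb] spB by (simp add: ssum_def)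
  then have 4: "ssum (span S) B = A" using spA by simp
  show ?thesis using that 1 2 3 4 by (auto simp: qgd_def)
qed

lemma gd_unique:
  assumes "qgd scale S A B" "finite S" "qgd scale T A B" "subspace B"
  shows "finite T \<and> card T = card S"
  using gd_bound[OF assms(1,2,3,4)] gd_bound[OF assms(3) _ assms(1,4)] by auto

lemma tower_fd:
  assumes sA: "subspace A" and sA': "subspace A'" and sB: "subspace B"
    and BA': "B \<subseteq> A'" and A'A: "A' \<subseteq> A" and k: "qfdd scale A B k"
  shows "\<exists>k1 k2. qfdd scale A A' k1 \<and> qfdd scale A' B k2 \<and> k = k1 + k2"
proof -
  obtain S where S: "qgd scale S A B" "finite S" "card S = k" using k by (auto simp: qfdd_def)
  obtain S1 where S1: "qgd scale S1 A A'" using gd_exists[OF sA sA' A'A] by blast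
  obtain S2 where S2: "qgd scale S2 A' B" using gd_exists[OF sA' sB BA'] by blast
  have S1p: "S1 \<subseteq> A" "independent S1" "span S1 \<inter> A' = {0}" "ssum (span S1) A' = A"
    using S1 by (auto simp: qgd_def)
  have S2p: "S2 \<subseteq> A'" "independent S2" "span S2 \<inter> B = {0}" "ssum (span S2) B = A'"
    using S2 by (auto simp: qgd_def)
  have sp1: "span S1 \<subseteq> A" using gd_span_sub[OF S1] .
  have sp2: "span S2 \<subseteq> A'" using gd_span_sub[OF S2] .
  have d12: "span S1 \<inter> span S2 = {0}" using S1p(3) sp2 span_zero by blast
  have "qgd scale (S1 \<union> S2) A B"
    unfolding qgd_def
  proof (intro conjI)
    show "S1 \<union> S2 \<subseteq> A" using S1p(1) S2p(1) A'A by auto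
    show "independent (S1 \<union> S2)" using indep_Un[OF S1p(2) S2p(2) d12] .
    show "span (S1 \<union> S2) \<inter> B = {0}"
    proof (intro equalityI subsetI)
      fix x :: 'v assume "x \<in> span (S1 \<union> S2) \<inter> B"
      then obtain x1 x2 where x: "x1 \<in> span S1" "x2 \<in> span S2" "x = x1 + x2" "x \<in> B"
        unfolding span_Un by blast
      have "x1 = x - x2" using x(3) by simp
      moreover have "x - x2 \<in> A'" using x(2,4) sp2 BA' sA' subspace_diff by blast
      ultimately have "x1 = 0" using S1p(3) x(1) by blast
      then have "x = x2" using x(3) by simp
      then have "x = 0" using S2p(3) x(2,4) by blast
      then show "x \<in> {0}" by simp
    next
      fix x :: 'v assume "x \<in> {0}"
      then show "x \<in> span (S1 \<union> S2) \<inter> B" using span_zero subspace_0[OF sB] by auto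
    qed
    show "ssum (span (S1 \<union> S2)) B = A"
    proof (intro equalityI subsetI)
      fix x :: 'v assume "x \<in> ssum (span (S1 \<union> S2)) B"
      then obtain y b where y: "y \<in> span (S1 \<union> S2)" "b \<in> B" "x = y + b" by (auto elim: ssum_E)
      then obtain x1 x2 where "x1 \<in> span S1" "x2 \<in> span S2" "y = x1 + x2"
        unfolding span_Un by blast
      then show "x \<in> A" using y sp1 sp2 BA' A'A sA subspace_add by (metis subset_iff)
    next
      fix a assume "a \<in> A"
      then obtain x1 a' where 1: "x1 \<in> span S1" "a' \<in> A'" "a = x1 + a'"
        using S1p(4) by (auto elim: ssum_E)
      then obtain x2 b where 2: "x2 \<in> span S2" "b \<in> B" "a' = x2 + b"
        using S2p(4) by (auto elim: ssum_E)
      have "x1 + x2 \<in> span (S1 \<union> S2)"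
        using 1(1) 2(1) span_mono[of S1 "S1 \<union> S2"] span_mono[of S2 "S1 \<union> S2"] span_add by blast
      moreover have "a = (x1 + x2) + b" using 1(3) 2(3) by (simp add: add.assoc)
      ultimately show "a \<in> ssum (span (S1 \<union> S2)) B" using 2(2) ssum_I by metis
    qed
  qed
  from gd_unique[OF S(1,2) this sB] have U: "finite (S1 \<union> S2)" "card (S1 \<union> S2) = k" using S(3) by auto
  have dj: "S1 \<inter> S2 = {}"
  proof (rule ccontr)
    assume "S1 \<inter> S2 \<noteq> {}"
    then obtain x where "x \<in> S1" "x \<in> S2" by blast
    then have "x \<in> span S1 \<inter> A'" using S2p(1) span_base by blast
    then have "x = 0" using S1p(3) by blast
    then show False using \<open>x \<in> S1\<close> S1p(2) dependent_zero by blast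
  qed
  have "k = card S1 + card S2" using U card_Un_disjoint[OF _ _ dj] by auto
  then show ?thesis using S1 S2 U unfolding qfdd_def by (intro exI[of _ "card S1"] exI[of _ "card S2"]) auto
qed

lemma tower:
  assumes "subspace A" "subspace A'" "subspace B" "B \<subseteq> A'" "A' \<subseteq> A" "qf scale (A, B)"
  shows "qd scale (A, B) = qd scale (A, A') + qd scale (A', B) \<and> qf scale (A, A') \<and> qf scale (A', B)"
proof -
  obtain k1 k2 where k: "qfdd scale A A' k1" "qfdd scale A' B k2" "qd scale (A, B) = k1 + k2"
    using tower_fd[OF assms(1-5) qf_fd[OF assms(6) assms(3)]] by blast
  show ?thesis using fd_qd[OF k(1) assms(2)] fd_qd[OF k(2) assms(3)] k(3) by simp
qed

lemma iso_gd:
  assumes sX: "subspace X" and sY: "subspace Y" and S: "qgd scale S X (X \<inter> Y)"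
  shows "qgd scale S (ssum X Y) Y"
proof -
  have Sp: "S \<subseteq> X" "independent S" "span S \<inter> (X \<inter> Y) = {0}" "ssum (span S) (X \<inter> Y) = X"
    using S by (auto simp: qgd_def)
  have sp: "span S \<subseteq> X" using gd_span_sub[OF S] .
  have "S \<subseteq> ssum X Y" using Sp(1) subspace_0[OF sY] ssum_I[of _ X 0 Y] by auto
  moreover have "span S \<inter> Y = {0}" using Sp(3) sp span_zero subspace_0[OF sY] by blast
  moreover have "ssum (span S) Y = ssum X Y"
  proof (intro equalityI subsetI)
    fix x :: 'v assume "x \<in> ssum (span S) Y" then show "x \<in> ssum X Y" using sp by (auto elim!: ssum_E intro: ssum_I)
  next
    fix x :: 'v assume "x \<in> ssum X Y"
    then obtain a y where 1: "a \<in> X" "y \<in> Y" "x = a + y" by (auto elim: ssum_E)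
    then obtain s w where 2: "s \<in> span S" "w \<in> X \<inter> Y" "a = s + w" using Sp(4) 1(1) ssum_E[of a "span S" "X \<inter> Y"] by blast
    have "x = s + (w + y)" using 1(3) 2(3) by (simp add: add.assoc)
    moreover have "w + y \<in> Y" using 2(2) 1(2) sY subspace_add by blast
    ultimately show "x \<in> ssum (span S) Y" using 2(1) ssum_I by metis
  qed
  ultimately show ?thesis using Sp(2) by (auto simp: qgd_def)
qed

lemma iso:
  assumes sX: "subspace X" and sY: "subspace Y"
    and f: "qf scale (ssum X Y, Y) \<or> qf scale (X, X \<inter> Y)"
  shows "qd scale (ssum X Y, Y) = qd scale (X, X \<inter> Y) \<and> qf scale (ssum X Y, Y) \<and> qf scale (X, X \<inter> Y)"
proof -
  have sXY: "subspace (X \<inter> Y)" using sX sY subspace_inter by blast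
  obtain k where k: "qfdd scale (ssum X Y) Y k" "qfdd scale X (X \<inter> Y) k"
  proof (cases "qf scale (X, X \<inter> Y)")
    case True
    then obtain S where S: "qgd scale S X (X \<inter> Y)" "finite S"
      using qf_fd[OF True sXY] by (auto simp: qfdd_def)
    show ?thesis using that[of "card S"] S iso_gd[OF sX sY S(1)] by (auto simp: qfdd_def)
  next
    case False
    then have "qf scale (ssum X Y, Y)" using f by blast
    then obtain T where T: "qgd scale T (ssum X Y) Y" "finite T"
      using qf_fd[OF _ sY] by (auto simp: qfdd_def)
    obtain S where S: "qgd scale S X (X \<inter> Y)" using gd_exists[OF sX sXY] by blast
    have "finite S \<and> card S = card T" using gd_unique[OF T iso_gd[OF sX sY S] sY] .
    then show ?thesis using that[of "card T"] S T by (auto simp: qfdd_def)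
  qed
  show ?thesis using fd_qd[OF k(1) sY] fd_qd[OF k(2) sXY] by simp
qed

lemma ssum_comm: "ssum A B = ssum B A"
  unfolding ssum_def by (metis (no_types, lifting) add.commute)

lemma ssum_assoc: "ssum (ssum A B) C = ssum A (ssum B C)"
  unfolding ssum_def by (auto simp: add.assoc) (metis add.assoc)+

lemma subspace_ssum: "subspace A \<Longrightarrow> subspace B \<Longrightarrow> subspace (ssum A B)"
  unfolding ssum_def by (rule subspace_sums)

lemma ssum_mono: "A \<subseteq> A' \<Longrightarrow> B \<subseteq> B' \<Longrightarrow> ssum A B \<subseteq> ssum A' B'"
  unfolding ssum_def by blast

lemma ssum_least: "subspace C \<Longrightarrow> A \<subseteq> C \<Longrightarrow> B \<subseteq> C \<Longrightarrow> ssum A B \<subseteq> C"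
  unfolding ssum_def using subspace_add by blast

lemma ssum_upper1: "subspace B \<Longrightarrow> A \<subseteq> ssum A B"
  using ssum_I[of _ A 0 B] subspace_0[of B] by auto

lemma ssum_upper2: "subspace A \<Longrightarrow> B \<subseteq> ssum A B"
  using ssum_I[of 0 A _ B] subspace_0[of A] by auto

lemma ssum_absorb: "subspace A \<Longrightarrow> subspace B \<Longrightarrow> B \<subseteq> A \<Longrightarrow> ssum A B = A"
  by (meson ssum_least ssum_upper1 subset_refl equalityI)

lemma ssum_zero1: "subspace B \<Longrightarrow> ssum {0} B = B"
  unfolding ssum_def by auto

lemma ssum_zero2: "subspace B \<Longrightarrow> ssum B {0} = B"
  unfolding ssum_def by auto

lemma modular:
  assumes "subspace X" "subspace Y" "subspace B" "B \<subseteq> X"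
  shows "X \<inter> ssum Y B = ssum B (X \<inter> Y)"
proof (intro equalityI subsetI)
  fix x :: 'v assume "x \<in> X \<inter> ssum Y B"
  then obtain y b where 1: "x \<in> X" "y \<in> Y" "b \<in> B" "x = y + b" by (auto elim: ssum_E)
  then have "y = x - b" by simp
  then have "y \<in> X" using 1 assms subspace_diff by blast
  then show "x \<in> ssum B (X \<inter> Y)" using 1 ssum_I[of b B y "X \<inter> Y"] by (simp add: add.commute)
next
  fix x :: 'v assume "x \<in> ssum B (X \<inter> Y)"
  then obtain y b where 1: "b \<in> B" "y \<in> X" "y \<in> Y" "x = b + y" by (auto elim: ssum_E)
  then have "x \<in> X" using assms subspace_add by blast
  moreover have "x \<in> ssum Y B" using 1 ssum_I[of y Y b B] by (simp add: add.commute)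
  ultimately show "x \<in> X \<inter> ssum Y B" by blast
qed

lemma abstract:
  assumes sK1: "subspace K1" and sK2: "subspace K2" and sK12: "subspace K12"
    and sI1: "subspace I1" and sI2: "subspace I2" and sI12: "subspace I12"
    and i1: "I12 \<subseteq> I1" and i2: "I12 \<subseteq> I2" and i3: "I1 \<subseteq> K1" and i4: "I2 \<subseteq> K2"
    and i5: "K1 \<subseteq> K12" and i6: "K2 \<subseteq> K12"
    and fdb: "qf scale (K2, I2)" and fd: "qf scale (K1, I1)"
    and fbc: "qf scale (K1 \<inter> K2, I12)" and fa: "qf scale (K12, ssum I1 I2)"
    and fB: "qf scale (I1 \<inter> K2, I12)" and fC: "qf scale (K12, ssum I1 K2)"
    and fD: "qf scale (K1 \<inter> I2, I12)" and fE: "qf scale (K12, ssum K1 I2)"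
    and fCt: "qf scale (ssum K1 K2, ssum I1 K2)" and fEt: "qf scale (ssum K1 K2, ssum K1 I2)"
  defines "xdb \<equiv> qd scale (K2, I2)" and "xd \<equiv> qd scale (K1, I1)"
    and "xbc \<equiv> qd scale (K1 \<inter> K2, I12)" and "xa \<equiv> qd scale (K12, ssum I1 I2)"
    and "a \<equiv> qd scale (I1 \<inter> I2, I12)" and "b \<equiv> qd scale (I1 \<inter> K2, I12)"
    and "c \<equiv> qd scale (K12, ssum I1 K2)" and "d \<equiv> qd scale (K1 \<inter> I2, I12)"
    and "e \<equiv> qd scale (K12, ssum K1 I2)" and "f \<equiv> qd scale (K12, ssum K1 K2)"
    and "bt \<equiv> qd scale (I1 \<inter> K2, I1 \<inter> I2)" and "dt \<equiv> qd scale (K1 \<inter> I2, I1 \<inter> I2)"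
    and "ct \<equiv> qd scale (ssum K1 K2, ssum I1 K2)" and "et \<equiv> qd scale (ssum K1 K2, ssum K1 I2)"
  shows "(b = bt + a \<and> d = dt + a \<and> c = ct + f \<and> e = et + f)
   \<and> (b \<le> xbc \<and> d \<le> xbc \<and> c \<le> xa \<and> e \<le> xa)
   \<and> (xa + bt = xdb + c \<and> xa + dt = xd + e \<and> xbc + et = xdb + d \<and> xbc + ct = xd + b)
   \<and> (xa + xbc = xd + xdb + a + f)
   \<and> (I1 = {0} \<and> I12 = {0} \<longrightarrow> xdb \<le> xa \<and> xbc \<le> xd)
   \<and> (I2 = {0} \<and> I12 = {0} \<longrightarrow> xbc \<le> xdb \<and> xd \<le> xa)
   \<and> (K2 = K12 \<longrightarrow> xd \<le> xbc \<and> xa \<le> xdb)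
   \<and> (K1 = K12 \<longrightarrow> xdb \<le> xbc \<and> xa \<le> xd)"
proof -
  note SS = sK1 sK2 sK12 sI1 sI2 sI12 subspace_inter subspace_ssum
  have T1: "b = bt + a"
    using tower[of "I1 \<inter> K2" "I1 \<inter> I2" I12] fB i1 i2 i4 unfolding a_def b_def bt_def
    by (auto simp: SS)
  have T2: "d = dt + a"
    using tower[of "K1 \<inter> I2" "I1 \<inter> I2" I12] fD i1 i2 i3 unfolding a_def d_def dt_def
    by (auto simp: SS)
  have T3: "c = f + ct"
    using tower[of K12 "ssum K1 K2" "ssum I1 K2"] fC i3 ssum_mono[OF i3 order_refl, of K2]
      ssum_least[OF sK12 i5 i6] unfolding c_def f_def ct_def by (auto simp: SS)
  have T4: "e = f + et"
    using tower[of K12 "ssum K1 K2" "ssum K1 I2"] fE ssum_mono[OF order_refl i4, of K1]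
      ssum_least[OF sK12 i5 i6] unfolding e_def f_def et_def by (auto simp: SS)
  have T5: "xbc = qd scale (K1 \<inter> K2, I1 \<inter> K2) + b"
    using tower[of "K1 \<inter> K2" "I1 \<inter> K2" I12] fbc i1 i2 i3 i4 unfolding xbc_def b_def
    by (auto simp: SS)
  have T6: "xbc = qd scale (K1 \<inter> K2, K1 \<inter> I2) + d"
    using tower[of "K1 \<inter> K2" "K1 \<inter> I2" I12] fbc i1 i2 i3 i4 unfolding xbc_def d_def
    by (auto simp: SS)
  have T7: "xa = c + qd scale (ssum I1 K2, ssum I1 I2) \<and> qf scale (ssum I1 K2, ssum I1 I2)"
    using tower[of K12 "ssum I1 K2" "ssum I1 I2"] fa ssum_mono[OF order_refl i4, of I1]
      ssum_least[of K12 I1 K2] i3 i5 i6 unfolding xa_def c_def by (auto simp: SS)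
  have T8: "xa = e + qd scale (ssum K1 I2, ssum I1 I2) \<and> qf scale (ssum K1 I2, ssum I1 I2)"
    using tower[of K12 "ssum K1 I2" "ssum I1 I2"] fa ssum_mono[OF i3 order_refl, of I2]
      ssum_least[of K12 K1 I2] i4 i5 i6 unfolding xa_def e_def by (auto simp: SS)
  have R1: "xa + bt = xdb + c"
  proof -
    define M where "M = ssum I2 (K2 \<inter> I1)"
    have sM: "subspace M" unfolding M_def by (simp add: SS)
    have e1: "ssum K2 (ssum I1 I2) = ssum I1 K2"
      using ssum_absorb[OF sK2 sI2 i4] by (metis ssum_assoc ssum_comm)
    have e2: "K2 \<inter> ssum I1 I2 = M" unfolding M_def using modular[OF sK2 sI1 sI2 i4] .
    have x: "qd scale (ssum I1 K2, ssum I1 I2) = qd scale (K2, M) \<and> qf scale (K2, M)"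
      using iso[OF sK2 subspace_ssum[OF sI1 sI2]] T7 unfolding e1 e2 by simp
    have t: "xdb = qd scale (K2, M) + qd scale (M, I2) \<and> qf scale (M, I2)"
      using tower[OF sK2 sM sI2] fdb i4 ssum_upper1[where A=I2 and B="K2 \<inter> I1"] subspace_inter[OF sK2 sI1]
        ssum_least[OF sK2 i4, of "K2 \<inter> I1"] unfolding xdb_def M_def by auto
    have e3: "ssum (K2 \<inter> I1) I2 = M" unfolding M_def by (rule ssum_comm)
    have e4: "K2 \<inter> I1 \<inter> I2 = I1 \<inter> I2" using i4 by blast
    have y: "qd scale (M, I2) = bt"
      using iso[of "K2 \<inter> I1" I2] t unfolding e3 e4 bt_def by (auto simp: SS Int_commute)
    show ?thesis using T7 x t y by linarith
  qed
  have R2: "xa + dt = xd + e"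
  proof -
    define M where "M = ssum I1 (K1 \<inter> I2)"
    have sM: "subspace M" unfolding M_def by (simp add: SS)
    have e1: "ssum K1 (ssum I1 I2) = ssum K1 I2"
      using ssum_absorb[OF sK1 sI1 i3] by (metis ssum_assoc)
    have e2: "K1 \<inter> ssum I1 I2 = M" unfolding M_def using modular[OF sK1 sI2 sI1 i3] ssum_comm by metis
    have x: "qd scale (ssum K1 I2, ssum I1 I2) = qd scale (K1, M) \<and> qf scale (K1, M)"
      using iso[OF sK1 subspace_ssum[OF sI1 sI2]] T8 unfolding e1 e2 by simp
    have t: "xd = qd scale (K1, M) + qd scale (M, I1) \<and> qf scale (M, I1)"
      using tower[OF sK1 sM sI1] fd i3 ssum_upper1[where A=I1 and B="K1 \<inter> I2"]
        ssum_least[OF sK1 i3, of "K1 \<inter> I2"] unfolding xd_def M_def by (auto simp: SS)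
    have e3: "ssum (K1 \<inter> I2) I1 = M" unfolding M_def by (rule ssum_comm)
    have e4: "K1 \<inter> I2 \<inter> I1 = I1 \<inter> I2" using i3 by blast
    have y: "qd scale (M, I1) = dt"
      using iso[of "K1 \<inter> I2" I1] t unfolding e3 e4 dt_def by (auto simp: SS)
    show ?thesis using T8 x t y by linarith
  qed
  have R3: "xbc + et = xdb + d"
  proof -
    define N where "N = ssum I2 (K2 \<inter> K1)"
    have sN: "subspace N" unfolding N_def by (simp add: SS)
    have e1: "ssum K2 (ssum K1 I2) = ssum K1 K2"
      using ssum_absorb[OF sK2 sI2 i4] by (metis ssum_assoc ssum_comm)
    have e2: "K2 \<inter> ssum K1 I2 = N" unfolding N_def using modular[OF sK2 sK1 sI2 i4] .
    have x: "et = qd scale (K2, N) \<and> qf scale (K2, N)"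
      using iso[OF sK2 subspace_ssum[OF sK1 sI2]] fEt unfolding e1 e2 et_def by simp
    have t: "xdb = qd scale (K2, N) + qd scale (N, I2) \<and> qf scale (N, I2)"
      using tower[OF sK2 sN sI2] fdb i4 ssum_upper1[where A=I2 and B="K2 \<inter> K1"]
        ssum_least[OF sK2 i4, of "K2 \<inter> K1"] unfolding xdb_def N_def by (auto simp: SS)
    have e3: "ssum (K1 \<inter> K2) I2 = N" unfolding N_def by (metis ssum_comm Int_commute)
    have e4: "K1 \<inter> K2 \<inter> I2 = K1 \<inter> I2" using i4 by blast
    have y: "qd scale (N, I2) = qd scale (K1 \<inter> K2, K1 \<inter> I2)"
      using iso[of "K1 \<inter> K2" I2] t unfolding e3 e4 by (auto simp: SS)
    show ?thesis using T6 x t y by linarith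
  qed
  have R4: "xbc + ct = xd + b"
  proof -
    define N where "N = ssum I1 (K1 \<inter> K2)"
    have sN: "subspace N" unfolding N_def by (simp add: SS)
    have e1: "ssum K1 (ssum I1 K2) = ssum K1 K2"
      using ssum_absorb[OF sK1 sI1 i3] by (metis ssum_assoc)
    have e2: "K1 \<inter> ssum I1 K2 = N" unfolding N_def using modular[OF sK1 sK2 sI1 i3] ssum_comm by metis
    have x: "ct = qd scale (K1, N) \<and> qf scale (K1, N)"
      using iso[OF sK1 subspace_ssum[OF sI1 sK2]] fCt unfolding e1 e2 ct_def by simp
    have t: "xd = qd scale (K1, N) + qd scale (N, I1) \<and> qf scale (N, I1)"
      using tower[OF sK1 sN sI1] fd i3 ssum_upper1[where A=I1 and B="K1 \<inter> K2"]
        ssum_least[OF sK1 i3, of "K1 \<inter> K2"] unfolding xd_def N_def by (auto simp: SS)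
    have e3: "ssum (K1 \<inter> K2) I1 = N" unfolding N_def by (rule ssum_comm)
    have e4: "K1 \<inter> K2 \<inter> I1 = I1 \<inter> K2" using i3 by blast
    have y: "qd scale (N, I1) = qd scale (K1 \<inter> K2, I1 \<inter> K2)"
      using iso[of "K1 \<inter> K2" I1] t unfolding e3 e4 by (auto simp: SS)
    show ?thesis using T5 x t y by linarith
  qed
  have P5: "I1 = {0} \<and> I12 = {0} \<longrightarrow> xdb \<le> xa \<and> xbc \<le> xd"
  proof
    assume z: "I1 = {0} \<and> I12 = {0}"
    have "xa = qd scale (K12, K2) + xdb"
      using tower[OF sK12 sK2 sI2 i4 i6] fa z ssum_zero1[OF sI2] unfolding xa_def xdb_def by simp
    moreover have "xd = qd scale (K1, K1 \<inter> K2) + xbc"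
      using tower[of K1 "K1 \<inter> K2" "{0}"] fd z subspace_0[OF sK1] subspace_0[OF sK2] unfolding xd_def xbc_def by (auto simp: SS)
    ultimately show "xdb \<le> xa \<and> xbc \<le> xd" by linarith
  qed
  have P6: "I2 = {0} \<and> I12 = {0} \<longrightarrow> xbc \<le> xdb \<and> xd \<le> xa"
  proof
    assume z: "I2 = {0} \<and> I12 = {0}"
    have "xa = qd scale (K12, K1) + xd"
      using tower[OF sK12 sK1 sI1 i3 i5] fa z ssum_zero2[OF sI1] unfolding xa_def xd_def by simp
    moreover have "xdb = qd scale (K2, K1 \<inter> K2) + xbc"
      using tower[of K2 "K1 \<inter> K2" "{0}"] fdb z subspace_0[OF sK1] subspace_0[OF sK2] unfolding xdb_def xbc_def by (auto simp: SS)
    ultimately show "xbc \<le> xdb \<and> xd \<le> xa" by linarith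
  qed
  have P7: "K2 = K12 \<longrightarrow> xd \<le> xbc \<and> xa \<le> xdb"
  proof
    assume z: "K2 = K12"
    have k: "K1 \<inter> K2 = K1" using z i5 by blast
    have "xbc = qd scale (K1, I1) + qd scale (I1, I12)"
      using tower[OF sK1 sI1 sI12 i1 i3] fbc k unfolding xbc_def by simp
    moreover have "xdb = qd scale (K12, ssum I1 I2) + qd scale (ssum I1 I2, I2)"
      using tower[OF sK12 subspace_ssum[OF sI1 sI2] sI2] fdb z ssum_upper2[OF sI1, of I2]
        ssum_least[of K12 I1 I2] i3 i4 i5 i6 sK12 unfolding xdb_def by auto
    ultimately show "xd \<le> xbc \<and> xa \<le> xdb" unfolding xd_def xa_def by linarith
  qed
  have P8: "K1 = K12 \<longrightarrow> xdb \<le> xbc \<and> xa \<le> xd"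
  proof
    assume z: "K1 = K12"
    have k: "K1 \<inter> K2 = K2" using z i6 by blast
    have "xbc = qd scale (K2, I2) + qd scale (I2, I12)"
      using tower[OF sK2 sI2 sI12 i2 i4] fbc k unfolding xbc_def by simp
    moreover have "xd = qd scale (K12, ssum I1 I2) + qd scale (ssum I1 I2, I1)"
      using tower[OF sK12 subspace_ssum[OF sI1 sI2] sI1] fd z ssum_upper1[OF sI2, of I1]
        ssum_least[of K12 I1 I2] i3 i4 i5 i6 sK12 unfolding xd_def by auto
    ultimately show "xdb \<le> xbc \<and> xa \<le> xd" unfolding xdb_def xa_def by linarith
  qed
  show ?thesis using T1 T2 T3 T4 T5 T6 T7 T8 R1 R2 R3 R4 P5 P6 P7 P8 by linarith
qed
end


theorem lemma2p4:
  fixes scale :: "complex \<Rightarrow> 'v::ab_group_add \<Rightarrow> 'v"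
    and E :: "nat \<Rightarrow> nat \<Rightarrow> 'v set" and d db :: "'v \<Rightarrow> 'v" and n p q :: nat
  assumes dc: "bdcx scale E d db n"
    and fin: "all_fin scale E d db"
    and pq: "p \<le> n" "q \<le> n"
  defines "h X \<equiv> qd scale (X E d db p q)"
  shows
    "(h Bq = h Bt + h Aq \<and> h Dq = h Dt + h Aq \<and> h Cq = h Ct + h Fq \<and> h Eq = h Et + h Fq)
   \<and> (h Bq \<le> h H_BC \<and> h Dq \<le> h H_BC \<and> h Cq \<le> h H_A \<and> h Eq \<le> h H_A)
   \<and> (h H_A + h Bt = h H_db + h Cq \<and> h H_A + h Dt = h H_d + h Eq \<and> h H_BC + h Et = h H_db + h Dq \<and> h H_BC + h Ct = h H_d + h Bq)
   \<and> (h H_A + h H_BC = h H_d + h H_db + h Aq + h Fq)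
   \<and> (p = 0 \<longrightarrow> h H_db \<le> h H_A \<and> h H_BC \<le> h H_d)
   \<and> (q = 0 \<longrightarrow> h H_BC \<le> h H_db \<and> h H_d \<le> h H_A)
   \<and> (q = n \<longrightarrow> h H_d \<le> h H_BC \<and> h H_A \<le> h H_db)
   \<and> (p = n \<longrightarrow> h H_db \<le> h H_BC \<and> h H_A \<le> h H_d)"
proof -
  have vs: "vector_space scale" and ld: "Vector_Spaces.linear scale scale d"
    and ldb: "Vector_Spaces.linear scale scale db"
    and sE: "\<And>p q. module.subspace scale (E p q)"
    and zE: "\<And>p q. n < p \<or> n < q \<Longrightarrow> E p q = {0}"
    and cx: "\<And>p q x. x \<in> E p q \<Longrightarrow> d x \<in> E (Suc p) q \<and> db x \<in> E p (Suc q) \<and>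
        d (d x) = 0 \<and> db (db x) = 0 \<and> d (db x) + db (d x) = 0"
    using dc unfolding bdcx_def by blast+
  interpret V: cvs scale using vs by (simp add: cvs_def)
  interpret LD: Vector_Spaces.linear scale scale d using ld .
  interpret LDB: Vector_Spaces.linear scale scale db using ldb .
  define K1 where "K1 = kerD E d p q"
  define K2 where "K2 = kerDb E db p q"
  define K12 where "K12 = kerDDb E d db p q"
  define I1 where "I1 = imD E d p q"
  define I2 where "I2 = imDb E db p q"
  define I12 where "I12 = imDDb E d db p q"
  have anti: "d (db x) = - db (d x)" if "x \<in> E p' q'" for x p' q'
    using cx[OF that] by (simp add: eq_neg_iff_add_eq_0)
  have sK1: "V.subspace K1" unfolding K1_def kerD_def
    using V.subspace_inter[OF sE LD.subspace_kernel] by (simp add: Int_def)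
  have sK2: "V.subspace K2" unfolding K2_def kerDb_def
    using V.subspace_inter[OF sE LDB.subspace_kernel] by (simp add: Int_def)
  have sK12: "V.subspace K12" unfolding K12_def kerDDb_def
    using V.subspace_inter[OF sE LDB.subspace_vimage[OF LD.subspace_kernel]] by (simp add: Int_def vimage_def)
  have sI1: "V.subspace I1" unfolding I1_def imD_def using LD.subspace_image[OF sE] by simp
  have sI2: "V.subspace I2" unfolding I2_def imDb_def using LDB.subspace_image[OF sE] by simp
  have sI12: "V.subspace I12" unfolding I12_def imDDb_def
    using LD.subspace_image[OF LDB.subspace_image[OF sE]] by (simp add: image_image)
  have z: "0 \<in> E p q" using V.subspace_0[OF sE] .
  have i1: "I12 \<subseteq> I1"
  proof
    fix x assume x: "x \<in> I12"
    show "x \<in> I1"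
    proof (cases "p = 0 \<or> q = 0")
      case True
      then have "x = 0" using x by (auto simp: I12_def imDDb_def)
      then show ?thesis using V.subspace_0[OF sI1] by simp
    next
      case False
      then obtain y where y: "y \<in> E (p - 1) (q - 1)" "x = d (db y)" using x by (auto simp: I12_def imDDb_def)
      have "db y \<in> E (p - 1) q" using cx[OF y(1)] False by (metis Suc_pred' neq0_conv)
      then show ?thesis using False y(2) by (auto simp: I1_def imD_def)
    qed
  qed
  have i2: "I12 \<subseteq> I2"
  proof
    fix x assume x: "x \<in> I12"
    show "x \<in> I2"
    proof (cases "p = 0 \<or> q = 0")
      case True
      then have "x = 0" using x by (auto simp: I12_def imDDb_def)
      then show ?thesis using V.subspace_0[OF sI2] by simp
    next
      case False
      then obtain y where y: "y \<in> E (p - 1) (q - 1)" "x = d (db y)" using x by (auto simp: I12_def imDDb_def)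
      have "d y \<in> E p (q - 1)" using cx[OF y(1)] False by (metis Suc_pred' neq0_conv)
      then have "- d y \<in> E p (q - 1)" using V.subspace_neg[OF sE] by blast
      moreover have "x = db (- d y)" using anti[OF y(1)] y(2) LDB.neg by simp
      ultimately show ?thesis using False by (auto simp: I2_def imDb_def)
    qed
  qed
  have i3: "I1 \<subseteq> K1"
  proof
    fix x assume x: "x \<in> I1"
    show "x \<in> K1"
    proof (cases "p = 0")
      case True
      then show ?thesis using x z LD.zero by (auto simp: I1_def imD_def K1_def kerD_def)
    next
      case False
      then obtain y where y: "y \<in> E (p - 1) q" "x = d y" using x by (auto simp: I1_def imD_def)
      then show ?thesis using cx[OF y(1)] False by (auto simp: K1_def kerD_def)
    qed
  qed
  have i4: "I2 \<subseteq> K2"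
  proof
    fix x assume x: "x \<in> I2"
    show "x \<in> K2"
    proof (cases "q = 0")
      case True
      then show ?thesis using x z LDB.zero by (auto simp: I2_def imDb_def K2_def kerDb_def)
    next
      case False
      then obtain y where y: "y \<in> E p (q - 1)" "x = db y" using x by (auto simp: I2_def imDb_def)
      then show ?thesis using cx[OF y(1)] False by (auto simp: K2_def kerDb_def)
    qed
  qed
  have i5: "K1 \<subseteq> K12"
  proof
    fix x assume "x \<in> K1"
    then have x: "x \<in> E p q" "d x = 0" by (auto simp: K1_def kerD_def)
    then have "d (db x) = 0" using anti[OF x(1)] LDB.zero by simp
    then show "x \<in> K12" using x by (auto simp: K12_def kerDDb_def)
  qed
  have i6: "K2 \<subseteq> K12" using LD.zero by (auto simp: K2_def kerDb_def K12_def kerDDb_def)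
  have F: "qf scale (Q E d db p q)" if "Q \<in> {H_db, H_d, H_BC, H_A, Aq, Bq, Cq, Dq, Eq, Fq, Bt, Dt, Ct, Et}" for Q
    using fin that unfolding all_fin_def by blast
  note AB = V.abstract[OF sK1 sK2 sK12 sI1 sI2 sI12 i1 i2 i3 i4 i5 i6
      F[of H_db, simplified, unfolded H_db_def, folded K2_def I2_def]
      F[of H_d, simplified, unfolded H_d_def, folded K1_def I1_def]
      F[of H_BC, simplified, unfolded H_BC_def, folded K1_def K2_def I12_def]
      F[of H_A, simplified, unfolded H_A_def, folded K12_def I1_def I2_def]
      F[of Bq, simplified, unfolded Bq_def, folded K2_def I1_def I12_def]
      F[of Cq, simplified, unfolded Cq_def, folded K12_def I1_def K2_def]
      F[of Dq, simplified, unfolded Dq_def, folded K1_def I2_def I12_def]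
      F[of Eq, simplified, unfolded Eq_def, folded K12_def K1_def I2_def]
      F[of Ct, simplified, unfolded Ct_def, folded K1_def K2_def I1_def]
      F[of Et, simplified, unfolded Et_def, folded K1_def K2_def I2_def]]
  have p0: "p = 0 \<Longrightarrow> I1 = {0} \<and> I12 = {0}" by (simp add: I1_def imD_def I12_def imDDb_def)
  have q0: "q = 0 \<Longrightarrow> I2 = {0} \<and> I12 = {0}" by (simp add: I2_def imDb_def I12_def imDDb_def)
  have qn: "q = n \<Longrightarrow> K2 = K12"
  proof -
    assume qn: "q = n"
    have "db x = 0" if "x \<in> E p q" for x using cx[OF that] zE[of p "Suc q"] qn by auto
    then have "K12 \<subseteq> K2" by (auto simp: K12_def kerDDb_def K2_def kerDb_def)
    then show ?thesis using i6 by blast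
  qed
  have pn: "p = n \<Longrightarrow> K1 = K12"
  proof -
    assume pn: "p = n"
    have "d x = 0" if "x \<in> E p q" for x using cx[OF that] zE[of "Suc p" q] pn by auto
    then have "K12 \<subseteq> K1" by (auto simp: K12_def kerDDb_def K1_def kerD_def)
    then show ?thesis using i5 by blast
  qed
  show ?thesis
    unfolding h_def H_db_def H_d_def H_BC_def H_A_def Aq_def Bq_def Cq_def Dq_def Eq_def Fq_def
      Bt_def Dt_def Ct_def Et_def
    unfolding K1_def[symmetric] K2_def[symmetric] K12_def[symmetric] I1_def[symmetric]
      I2_def[symmetric] I12_def[symmetric]
    using AB p0 q0 qn pn by blast
qed

end
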